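(* Let $M,P$ be positive integers, let $\Gamma$ be the set of positive 1-1 vectors in $\{-1,0,1,\dots,M\}^P$, let $\eta_i(j)>0$ for $i\in\{1,\dots,P\}$, $j\in\{-1,\dots,M\}$ be as in the context, and let $\pi$ be the target distribution $\pi(\gamma)\propto 1_{\Gamma}(\gamma)\prod_{i=1}^P\eta_i(\gamma_i)$. Consider the Gibbs sampler on $\Gamma$ with transition kernel $$\pi(\gamma'|\gamma)=\prod_{n=1}^P\pi_n(\gamma'_n|\gamma'_1,\dots,\gamma'_{n-1},\gamma_{n+1},\dots,\gamma_P),$$ where, writing $\bar n=\{1,\dots,P\}\setminus\{n\}$ and $\gamma_{\bar n}$ for the vector with the $n$-th coordinate removed, the conditionals are given by $$\pi_n(\gamma_n|\gamma_{\bar n})\propto\eta_n(\gamma_n)\prod_{i\in\bar n}\big(1-1_{\{1,\dots,M\}}(\gamma_n)\,\delta_{\gamma_n}[\gamma_i]\big).$$ Then, starting from any initial state in $\Gamma$, the sampler converges to $\pi$ at an exponential rate: letting $\pi^j(\gamma'|\gamma)$ denote the $j$-step transition probabilities and $\beta=\min_{\gamma,\gamma'\in\Gamma}\pi^2(\gamma'|\gamma)$, one has $\beta>0$ and for every $j\ge1$ $$\max_{\gamma,\gamma'\in\Gamma}\big|\pi^j(\gamma'|\gamma)-\pi(\gamma')\big|\le(1-2\beta)^{\lfloor j/2\rfloor}.$$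
   Context: A vector $\gamma\in\{-1,\dots,M\}^P$ is positive 1-1 if there are no distinct $i,i'$ with $\gamma_i=\gamma_{i'}>0$. $1_S$ is the indicator of $S$; $\delta_a[b]=1$ if $a=b$ and $0$ otherwise. In the paper the weights arise as follows: given labels $\ell_1,\dots,\ell_R$ of existing objects and birth labels $\ell_{R+1},\dots,\ell_P$, expected survival probabilities $\bar P_S(\ell_i)\in(0,1)$ ($i\le R$), birth probabilities $r_B(\ell_i)$ ($i>R$), and positive quantities $\bar\psi^{(j)}(\ell_i)$ (predicted likelihood of label $\ell_i$ being misdetected, $j=0$, or generating measurement $j\in\{1,\dots,M\}$), one sets $\eta_i(j)=1-\bar P_S(\ell_i)$ if $i\le R$, $j<0$; $\eta_i(j)=\bar P_S(\ell_i)\bar\psi^{(j)}(\ell_i)$ if $i\le R$, $j\ge0$; $\eta_i(j)=1-r_B(\ell_i)$ if $i>R$, $j<0$; $\eta_i(j)=r_B(\ell_i)\bar\psi^{(j)}(\ell_i)$ if $i>R$, $j\ge0$. These are assumed to satisfy $\eta_i(j)>0$ for all $i,j$. *)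

theory Defs
  imports Complex_Main
begin

text \<open>Vectors gamma in {-1,...,M}^P are lists of length P (coordinates indexed 0..P-1).\<close>

definition pos11 :: "int list \<Rightarrow> bool" where
  "pos11 g \<longleftrightarrow> (\<forall>i<length g. \<forall>i'<length g. i \<noteq> i' \<and> g ! i = g ! i' \<longrightarrow> g ! i \<le> 0)"

definition Gam :: "nat \<Rightarrow> nat \<Rightarrow> int list set" where
  "Gam M P = {g. length g = P \<and> set g \<subseteq> {-1..int M} \<and> pos11 g}"

definition weight :: "nat \<Rightarrow> (nat \<Rightarrow> int \<Rightarrow> real) \<Rightarrow> int list \<Rightarrow> real" where
  "weight P eta g = (\<Prod>i<P. eta i (g ! i))"

definition target :: "nat \<Rightarrow> nat \<Rightarrow> (nat \<Rightarrow> int \<Rightarrow> real) \<Rightarrow> int list \<Rightarrow> real" where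
  "target M P eta g =
     (if g \<in> Gam M P then weight P eta g / (\<Sum>h\<in>Gam M P. weight P eta h) else 0)"

text \<open>Unnormalised conditional weight of value c for coordinate n, given the other
  coordinates of d (coordinate n of d is ignored).\<close>
definition cond_w :: "nat \<Rightarrow> nat \<Rightarrow> (nat \<Rightarrow> int \<Rightarrow> real) \<Rightarrow> nat \<Rightarrow> int list \<Rightarrow> int \<Rightarrow> real" where
  "cond_w M P eta n d c =
     eta n c * (\<Prod>i\<in>{..<P} - {n}.
        (1 - (if c \<in> {1..int M} then 1 else 0) * (if c = d ! i then 1 else 0)))"

definition cond_prob :: "nat \<Rightarrow> nat \<Rightarrow> (nat \<Rightarrow> int \<Rightarrow> real) \<Rightarrow> nat \<Rightarrow> int list \<Rightarrow> int \<Rightarrow> real" where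
  "cond_prob M P eta n d c =
     cond_w M P eta n d c / (\<Sum>c'\<in>{-1..int M}. cond_w M P eta n d c')"

text \<open>One systematic-scan Gibbs sweep: coordinate n is drawn conditionally on the
  already updated coordinates 0..n-1 of g' and the old coordinates n+1..P-1 of g.\<close>
definition gibbs_kernel :: "nat \<Rightarrow> nat \<Rightarrow> (nat \<Rightarrow> int \<Rightarrow> real) \<Rightarrow> int list \<Rightarrow> int list \<Rightarrow> real" where
  "gibbs_kernel M P eta g g' =
     (if g' \<in> Gam M P then
        (\<Prod>n<P. cond_prob M P eta n (take n g' @ drop n g) (g' ! n))
      else 0)"

fun gibbs_pow :: "nat \<Rightarrow> nat \<Rightarrow> (nat \<Rightarrow> int \<Rightarrow> real) \<Rightarrow> nat \<Rightarrow> int list \<Rightarrow> int list \<Rightarrow> real" where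
  "gibbs_pow M P eta 0 g g' = (if g = g' then 1 else 0)"
| "gibbs_pow M P eta (Suc j) g g' =
     (\<Sum>d\<in>Gam M P. gibbs_pow M P eta j g d * gibbs_kernel M P eta d g')"

end

theory Submission
  imports Defs
begin


lemma contr:
  fixes Q :: "'a \<Rightarrow> 'a \<Rightarrow> real"
  assumes fin: "finite S" and Qnn: "\<And>x d. x \<in> S \<Longrightarrow> d \<in> S \<Longrightarrow> Q x d \<ge> \<beta>"
    and b0: "\<beta> \<ge> 0"
    and row: "\<And>x. x \<in> S \<Longrightarrow> (\<Sum>d\<in>S. Q x d) = 1"
    and y: "y0 \<in> S" "y1 \<in> S" and f: "\<And>d. d \<in> S \<Longrightarrow> f y0 \<le> f d \<and> f d \<le> f y1"
    and xy: "x \<in> S" "y \<in> S"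
  shows "(\<Sum>d\<in>S. Q x d * f d) - (\<Sum>d\<in>S. Q y d * f d) \<le> (1 - 2*\<beta>) * (f y1 - f y0)"
proof -
  have a: "(\<Sum>d\<in>S. Q x d * f d) = f y1 - (\<Sum>d\<in>S. Q x d * (f y1 - f d))"
    using row[OF xy(1)] by (simp add: algebra_simps sum_subtractf sum_distrib_right[symmetric] sum_distrib_left[symmetric])
  have "Q x y0 * (f y1 - f y0) \<le> (\<Sum>d\<in>S. Q x d * (f y1 - f d))"
    by (rule member_le_sum[OF y(1) _ fin, where f="\<lambda>d. Q x d * (f y1 - f d)"])
       (use Qnn b0 f xy in \<open>auto intro!: mult_nonneg_nonneg\<close>, smt (verit))
  moreover have "\<beta> * (f y1 - f y0) \<le> Q x y0 * (f y1 - f y0)"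
    using Qnn[OF xy(1) y(1)] f[OF y(1)] by (intro mult_right_mono) auto
  ultimately have A: "(\<Sum>d\<in>S. Q x d * f d) \<le> f y1 - \<beta> * (f y1 - f y0)" using a by linarith
  have c: "(\<Sum>d\<in>S. Q y d * f d) = f y0 + (\<Sum>d\<in>S. Q y d * (f d - f y0))"
    using row[OF xy(2)] by (simp add: algebra_simps sum_subtractf sum_distrib_right[symmetric] sum_distrib_left[symmetric])
  have "Q y y1 * (f y1 - f y0) \<le> (\<Sum>d\<in>S. Q y d * (f d - f y0))"
    by (rule member_le_sum[OF y(2) _ fin, where f="\<lambda>d. Q y d * (f d - f y0)"])
       (use Qnn b0 f xy in \<open>auto intro!: mult_nonneg_nonneg\<close>, smt (verit))
  moreover have "\<beta> * (f y1 - f y0) \<le> Q y y1 * (f y1 - f y0)"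
    using Qnn[OF xy(2) y(2)] f[OF y(1)] by (intro mult_right_mono) auto
  ultimately have B: "(\<Sum>d\<in>S. Q y d * f d) \<ge> f y0 + \<beta> * (f y1 - f y0)" using c by linarith
  show ?thesis using A B by (simp add: algebra_simps)
qed


lemma markov:
  fixes S :: "'a set" and K :: "'a \<Rightarrow> 'a \<Rightarrow> real" and pw :: "nat \<Rightarrow> 'a \<Rightarrow> 'a \<Rightarrow> real"
    and pi :: "'a \<Rightarrow> real"
  assumes fin: "finite S" and ab: "a \<in> S" "b \<in> S" "a \<noteq> b"
    and Knn: "\<And>g h. g \<in> S \<Longrightarrow> h \<in> S \<Longrightarrow> K g h \<ge> 0"
    and row: "\<And>g. g \<in> S \<Longrightarrow> (\<Sum>h\<in>S. K g h) = 1"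
    and pinn: "\<And>g. g \<in> S \<Longrightarrow> pi g \<ge> 0"
    and pisum: "(\<Sum>g\<in>S. pi g) = 1"
    and stat: "\<And>h. h \<in> S \<Longrightarrow> (\<Sum>g\<in>S. pi g * K g h) = pi h"
    and pw0: "\<And>g h. pw 0 g h = (if g = h then 1 else 0)"
    and pwS: "\<And>j g h. pw (Suc j) g h = (\<Sum>d\<in>S. pw j g d * K d h)"
    and pos: "\<And>g h. g \<in> S \<Longrightarrow> h \<in> S \<Longrightarrow> pw 2 g h > 0"
  defines "\<beta> \<equiv> Min {pw 2 g g' | g g'. g \<in> S \<and> g' \<in> S}"
  shows "\<beta> > 0 \<and> (\<forall>j\<ge>1. \<forall>g\<in>S. \<forall>g'\<in>S. \<bar>pw j g g' - pi g'\<bar> \<le> (1 - 2 * \<beta>) ^ (j div 2))"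
proof -
  have pw_nn: "pw j g h \<ge> 0" if "g \<in> S" "h \<in> S" for j g h
    using that by (induction j arbitrary: h) (auto simp: pw0 pwS intro!: sum_nonneg mult_nonneg_nonneg Knn)
  have pw_row: "(\<Sum>h\<in>S. pw j g h) = 1" if "g \<in> S" for j g
  proof (induction j)
    case 0 show ?case using that fin by (simp add: pw0)
  next
    case (Suc j)
    have "(\<Sum>h\<in>S. pw (Suc j) g h) = (\<Sum>d\<in>S. pw j g d * (\<Sum>h\<in>S. K d h))"
      unfolding pwS by (subst sum.swap) (simp add: sum_distrib_left)
    also have "\<dots> = (\<Sum>d\<in>S. pw j g d)" using row by simp
    finally show ?case using Suc by simp
  qed
  have pw_le1: "pw j g h \<le> 1" if "g \<in> S" "h \<in> S" for j g h
  proof -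
    have "pw j g h \<le> (\<Sum>h\<in>S. pw j g h)"
      by (rule member_le_sum) (use that fin pw_nn in auto)
    thus ?thesis using pw_row[OF that(1)] by simp
  qed
  have pw_add: "pw (i + j) g h = (\<Sum>d\<in>S. pw i g d * pw j d h)" if "h \<in> S" for i j g h
    using that
  proof (induction j arbitrary: h)
    case 0
    have "(\<Sum>d\<in>S. pw i g d * pw 0 d h) = (\<Sum>d\<in>S. if d = h then pw i g d else 0)"
      by (rule sum.cong) (auto simp: pw0)
    thus ?case using 0 fin by simp
  next
    case (Suc j)
    have "pw (i + Suc j) g h = (\<Sum>e\<in>S. (\<Sum>d\<in>S. pw i g d * pw j d e) * K e h)"
      using Suc by (simp add: pwS)
    also have "\<dots> = (\<Sum>d\<in>S. pw i g d * (\<Sum>e\<in>S. pw j d e * K e h))"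
      by (simp add: sum_distrib_right sum_distrib_left mult.assoc) (rule sum.swap)
    also have "\<dots> = (\<Sum>d\<in>S. pw i g d * pw (Suc j) d h)" by (simp add: pwS)
    finally show ?case .
  qed
  have stat_pw: "(\<Sum>g\<in>S. pi g * pw j g h) = pi h" if "h \<in> S" for j h
    using that
  proof (induction j arbitrary: h)
    case 0
    have "(\<Sum>g\<in>S. pi g * pw 0 g h) = (\<Sum>g\<in>S. if g = h then pi g else 0)"
      by (rule sum.cong) (auto simp: pw0)
    thus ?case using 0 fin by simp
  next
    case (Suc j)
    have "(\<Sum>g\<in>S. pi g * pw (Suc j) g h) = (\<Sum>d\<in>S. (\<Sum>g\<in>S. pi g * pw j g d) * K d h)"
      unfolding pwS by (simp add: sum_distrib_right sum_distrib_left mult.assoc) (rule sum.swap)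
    also have "\<dots> = (\<Sum>d\<in>S. pi d * K d h)" using Suc by simp
    finally show ?case using stat Suc by simp
  qed
  define T where "T = {pw 2 g g' | g g'. g \<in> S \<and> g' \<in> S}"
  have T_eq: "T = (\<lambda>(g,g'). pw 2 g g') ` (S \<times> S)" unfolding T_def by auto
  have finT: "finite T" unfolding T_eq using fin by simp
  have neT: "T \<noteq> {}" unfolding T_eq using ab by auto
  have bpos: "\<beta> > 0" unfolding \<beta>_def T_def[symmetric] using finT neT pos
    by (subst Min_gr_iff) (auto simp: T_def)
  have ble: "\<beta> \<le> pw 2 g h" if "g \<in> S" "h \<in> S" for g h
    unfolding \<beta>_def T_def[symmetric] by (rule Min_le[OF finT]) (use that in \<open>auto simp: T_def\<close>)
  have "pw 2 a a + pw 2 a b \<le> (\<Sum>h\<in>S. pw 2 a h)"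
  proof -
    have "(\<Sum>h\<in>{a,b}. pw 2 a h) \<le> (\<Sum>h\<in>S. pw 2 a h)"
      by (rule sum_mono2) (use fin ab pw_nn in auto)
    thus ?thesis using ab by simp
  qed
  hence "2 * \<beta> \<le> 1" using pw_row[OF ab(1), of 2] ble[OF ab(1) ab(1)] ble[OF ab(1) ab(2)] by linarith
  hence c0: "1 - 2 * \<beta> \<ge> 0" by simp
  define c where "c = 1 - 2 * \<beta>"
  have osc: "\<forall>x\<in>S. \<forall>y\<in>S. \<forall>t\<in>S. pw j x t - pw j y t \<le> c ^ (j div 2)" for j
  proof (induction j rule: nat_less_induct)
    case (1 j)
    show ?case
    proof (cases "j < 2")
      case True
      have j0: "j div 2 = 0" using True by simp
      show ?thesis
      proof (intro ballI)
        fix x y t assume xyt: "x \<in> S" "y \<in> S" "t \<in> S"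
        have "pw j x t \<le> 1" "pw j y t \<ge> 0" using pw_nn pw_le1 xyt by auto
        thus "pw j x t - pw j y t \<le> c ^ (j div 2)" unfolding j0 by simp
      qed
    next
      case False
      then obtain i where j: "j = 2 + i" by (metis add_diff_inverse_nat)
      have IH: "\<forall>x\<in>S. \<forall>y\<in>S. \<forall>t\<in>S. pw i x t - pw i y t \<le> c ^ (i div 2)"
        using 1 j by simp
      show ?thesis
      proof (intro ballI)
        fix x y t assume xyt: "x \<in> S" "y \<in> S" "t \<in> S"
        define f where "f = (\<lambda>d. pw i d t)"
        have ne: "f ` S \<noteq> {}" "finite (f ` S)" using ab fin by auto
        obtain y0 where y00: "y0 \<in> S" "f y0 = Min (f ` S)"
          using Min_in[OF ne(2,1)] by auto
        have y0: "y0 \<in> S" "\<forall>d\<in>S. f y0 \<le> f d" using y00 Min_le[OF ne(2)] by auto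
        obtain y1 where y11: "y1 \<in> S" "f y1 = Max (f ` S)"
          using Max_in[OF ne(2,1)] by auto
        have y1: "y1 \<in> S" "\<forall>d\<in>S. f d \<le> f y1" using y11 Max_ge[OF ne(2)] by auto
        have "pw j x t - pw j y t = (\<Sum>d\<in>S. pw 2 x d * f d) - (\<Sum>d\<in>S. pw 2 y d * f d)"
          unfolding j f_def using pw_add[OF xyt(3), of 2 i x] pw_add[OF xyt(3), of 2 i y] by simp
        also have "\<dots> \<le> c * (f y1 - f y0)" unfolding c_def
          by (rule contr[OF fin _ _ _ y0(1) y1(1) _ xyt(1,2)])
             (use ble bpos pw_row y0 y1 in auto)
        also have "\<dots> \<le> c * c ^ (i div 2)"
          using IH y0 y1 xyt c0 unfolding f_def c_def by (intro mult_left_mono) auto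
        also have "\<dots> = c ^ (j div 2)" using j by simp
        finally show "pw j x t - pw j y t \<le> c ^ (j div 2)" .
      qed
    qed
  qed
  have main: "\<bar>pw j g g' - pi g'\<bar> \<le> c ^ (j div 2)" if "g \<in> S" "g' \<in> S" for j g g'
  proof -
    have "pw j g g' - pi g' = (\<Sum>x\<in>S. pi x * (pw j g g' - pw j x g'))"
      using stat_pw[OF that(2), of j] pisum
      by (simp add: algebra_simps sum_subtractf sum_distrib_right[symmetric])
    also have "\<bar>\<dots>\<bar> \<le> (\<Sum>x\<in>S. \<bar>pi x * (pw j g g' - pw j x g')\<bar>)" by (rule sum_abs)
    also have "\<dots> \<le> (\<Sum>x\<in>S. pi x * c ^ (j div 2))"
    proof (rule sum_mono)
      fix x assume x: "x \<in> S"
      have "\<bar>pw j g g' - pw j x g'\<bar> \<le> c ^ (j div 2)"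
        using osc[of j] x that by (auto simp: abs_le_iff)
      thus "\<bar>pi x * (pw j g g' - pw j x g')\<bar> \<le> pi x * c ^ (j div 2)"
        using pinn[OF x] by (simp add: abs_mult mult_left_mono)
    qed
    also have "\<dots> = c ^ (j div 2)" using pisum by (simp add: sum_distrib_right[symmetric])
    finally show ?thesis .
  qed
  show ?thesis using bpos main unfolding c_def by auto
qed



lemma sum_single:
  assumes "finite A" "a \<in> A" "\<And>x. x \<in> A \<Longrightarrow> x \<noteq> a \<Longrightarrow> f x = 0"
  shows "sum f A = f a"
proof -
  have "sum f A = f a + sum f (A - {a})" using assms by (simp add: sum.remove)
  also have "sum f (A - {a}) = 0" using assms by (intro sum.neutral) auto
  finally show ?thesis by simp
qed

definition Lst :: "nat \<Rightarrow> nat \<Rightarrow> int list set" where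
  "Lst M P = {g. length g = P \<and> set g \<subseteq> {-1..int M}}"

definition w :: "nat \<Rightarrow> (nat \<Rightarrow> int \<Rightarrow> real) \<Rightarrow> int list \<Rightarrow> real" where
  "w P eta g = (if pos11 g then weight P eta g else 0)"

definition oth :: "nat \<Rightarrow> nat \<Rightarrow> int list \<Rightarrow> bool" where
  "oth n P x = (\<forall>i<P. \<forall>i'<P. i \<noteq> n \<and> i' \<noteq> n \<and> i \<noteq> i' \<and> x!i = x!i' \<longrightarrow> x!i \<le> 0)"

definition Rn :: "nat \<Rightarrow> (nat \<Rightarrow> int \<Rightarrow> real) \<Rightarrow> nat \<Rightarrow> int list \<Rightarrow> real" where
  "Rn P eta n x = (if oth n P x then (\<Prod>i\<in>{..<P}-{n}. eta i (x!i)) else 0)"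

lemma finite_Lst: "finite (Lst M P)"
proof -
  have "Lst M P = {xs. set xs \<subseteq> {-1..int M} \<and> length xs = P}" by (auto simp: Lst_def)
  thus ?thesis using finite_lists_length_eq[OF finite_atLeastAtMost_int] by simp
qed

lemma Gam_Lst: "Gam M P = {g \<in> Lst M P. pos11 g}"
  by (auto simp: Gam_def Lst_def)

lemma finite_Gam: "finite (Gam M P)"
  using finite_Lst by (simp add: Gam_Lst)

lemma prod01:
  assumes "finite A"
  shows "(\<Prod>i\<in>A. (1 - (if Q then 1 else 0) * (if c = d i then 1 else 0)) :: real)
      = (if Q \<and> (\<exists>i\<in>A. c = d i) then 0 else 1)"
  using assms by (induction A rule: finite_induct) auto

lemma cond_w_eq:
  "cond_w M P eta n d c = eta n c * (if c \<in> {1..int M} \<and> (\<exists>i\<in>{..<P}-{n}. c = d!i) then 0 else 1)"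
  unfolding cond_w_def by (subst prod01) auto

lemma cond_w_upd:
  "cond_w M P eta n (d[n:=a]) = cond_w M P eta n d"
  by (rule ext) (simp add: cond_w_eq)

lemma pos11_upd:
  assumes "length x = P" "n < P"
  shows "pos11 (x[n:=c]) \<longleftrightarrow> oth n P x \<and> \<not> (c > 0 \<and> (\<exists>i\<in>{..<P}-{n}. c = x!i))"
  using assms unfolding pos11_def oth_def
  apply (auto simp: nth_list_update)
  apply (metis linorder_not_less)+
  done


locale gibbs =
  fixes M P :: nat and eta :: "nat \<Rightarrow> int \<Rightarrow> real"
  assumes P1: "P \<ge> 1"
    and eta_pos: "\<And>i j. i < P \<Longrightarrow> j \<in> {-1..int M} \<Longrightarrow> eta i j > 0"
begin

abbreviation "L \<equiv> Lst M P"
abbreviation "cw \<equiv> cond_w M P eta"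
abbreviation "cp \<equiv> cond_prob M P eta"

lemma L_len: "x \<in> L \<Longrightarrow> length x = P" by (simp add: Lst_def)
lemma L_nth: "x \<in> L \<Longrightarrow> i < P \<Longrightarrow> x!i \<in> {-1..int M}"
  unfolding Lst_def using nth_mem by blast

lemma weight_upd:
  assumes "length x = P" "n < P"
  shows "weight P eta (x[n:=c]) = eta n c * (\<Prod>i\<in>{..<P}-{n}. eta i (x!i))"
proof -
  have "weight P eta (x[n:=c]) = eta n (x[n:=c]!n) * (\<Prod>i\<in>{..<P}-{n}. eta i (x[n:=c]!i))"
    unfolding weight_def using assms by (subst prod.remove[of _ n]) auto
  also have "(\<Prod>i\<in>{..<P}-{n}. eta i (x[n:=c]!i)) = (\<Prod>i\<in>{..<P}-{n}. eta i (x!i))"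
    by (intro prod.cong) auto
  finally show ?thesis using assms by simp
qed

lemma key:
  assumes "length x = P" "n < P" "c \<in> {-1..int M}"
  shows "w P eta (x[n:=c]) = cw n x c * Rn P eta n x"
proof -
  have e: "c \<in> {1..int M} \<longleftrightarrow> c > 0" using assms(3) by auto
  define Q where "Q = (\<Prod>i\<in>{..<P}-{n}. eta i (x!i))"
  define C where "C = (0 < c \<and> (\<exists>i\<in>{..<P}-{n}. c = x!i))"
  have 1: "w P eta (x[n:=c]) = (if oth n P x \<and> \<not> C then eta n c * Q else 0)"
    unfolding w_def pos11_upd[OF assms(1,2)] weight_upd[OF assms(1,2)] Q_def C_def by simp
  have 2: "cw n x c = eta n c * (if C then 0 else 1)"
    unfolding cond_w_eq e C_def by simp
  have 3: "Rn P eta n x = (if oth n P x then Q else 0)" unfolding Rn_def Q_def by simp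
  show ?thesis unfolding 1 2 3 by simp
qed

lemma cw_nonneg: "n < P \<Longrightarrow> c \<in> {-1..int M} \<Longrightarrow> cw n d c \<ge> 0"
  using eta_pos[of n c] by (simp add: cond_w_eq)

lemma cw_m1: "n < P \<Longrightarrow> cw n d (-1) > 0"
  using eta_pos[of n "-1"] by (simp add: cond_w_eq)

lemma Z_pos: "n < P \<Longrightarrow> (\<Sum>c\<in>{-1..int M}. cw n d c) > 0"
proof -
  assume n: "n < P"
  have "cw n d (-1) \<le> (\<Sum>c\<in>{-1..int M}. cw n d c)"
    by (rule member_le_sum) (use n cw_nonneg in auto)
  thus ?thesis using cw_m1[OF n, of d] by linarith
qed

lemma cp_nonneg: "n < P \<Longrightarrow> c \<in> {-1..int M} \<Longrightarrow> cp n d c \<ge> 0"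
  unfolding cond_prob_def using cw_nonneg Z_pos by (simp add: less_imp_le)

lemma cp_sum: "n < P \<Longrightarrow> (\<Sum>c\<in>{-1..int M}. cp n d c) = 1"
  unfolding cond_prob_def using Z_pos[of n d] by (simp add: sum_divide_distrib[symmetric])

lemma cp_pos: "n < P \<Longrightarrow> cw n d c > 0 \<Longrightarrow> cp n d c > 0"
  unfolding cond_prob_def using Z_pos by simp

lemma sum_line:
  assumes "x \<in> L" "n < P"
  shows "(\<Sum>h\<in>L. if h = x[n:=h!n] then F h else 0) = (\<Sum>c\<in>{-1..int M}. F (x[n:=c]))"
proof -
  have "(\<Sum>h\<in>L. if h = x[n:=h!n] then F h else 0) = sum F {h\<in>L. h = x[n:=h!n]}"
    by (rule sum.inter_filter[OF finite_Lst, symmetric])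
  also have "{h\<in>L. h = x[n:=h!n]} = (\<lambda>c. x[n:=c]) ` {-1..int M}"
  proof
    show "{h \<in> L. h = x[n := h ! n]} \<subseteq> (\<lambda>c. x[n := c]) ` {-1..int M}"
    proof
      fix h assume h: "h \<in> {h \<in> L. h = x[n := h ! n]}"
      hence "h!n \<in> {-1..int M}" using L_nth assms by blast
      moreover have "h = x[n := h ! n]" using h by blast
      ultimately show "h \<in> (\<lambda>c. x[n := c]) ` {-1..int M}" by (rule rev_image_eqI)
    qed
    show "(\<lambda>c. x[n := c]) ` {-1..int M} \<subseteq> {h \<in> L. h = x[n := h ! n]}"
    proof
      fix h assume "h \<in> (\<lambda>c. x[n := c]) ` {-1..int M}"
      then obtain c where c: "c \<in> {-1..int M}" "h = x[n:=c]" by blast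
      have "set h \<subseteq> {-1..int M}" using c assms set_update_subset_insert[of x n c]
        by (auto simp: Lst_def)
      moreover have "length h = P" using c assms L_len by simp
      moreover have "h = x[n := h ! n]" using c assms L_len by simp
      ultimately show "h \<in> {h \<in> L. h = x[n := h ! n]}" unfolding Lst_def by blast
    qed
  qed
  also have "sum F \<dots> = (\<Sum>c\<in>{-1..int M}. F (x[n:=c]))"
    by (rule sum.reindex_cong[where l="\<lambda>c. x[n:=c]"]) (use assms L_len in \<open>auto simp: inj_on_def, metis nth_list_update_eq\<close>)
  finally show ?thesis .
qed


definition Kn :: "nat \<Rightarrow> int list \<Rightarrow> int list \<Rightarrow> real" where
  "Kn n g h = (if drop n h = drop n g then (\<Prod>m<n. cp m (take m h @ drop m g) (h!m)) else 0)"

definition Tn :: "nat \<Rightarrow> int list \<Rightarrow> int list \<Rightarrow> real" where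
  "Tn n x h = (if h = x[n:=h!n] then cp n x (h!n) else 0)"

lemma take_drop_L:
  assumes "g \<in> L" "h \<in> L" "n \<le> P"
  shows "take n h @ drop n g \<in> L"
proof -
  have sh: "set h \<subseteq> {-1..int M}" and sg: "set g \<subseteq> {-1..int M}"
    using assms(1,2) unfolding Lst_def by auto
  have "set (take n h) \<subseteq> {-1..int M}" "set (drop n g) \<subseteq> {-1..int M}"
    using subset_trans[OF set_take_subset sh] subset_trans[OF set_drop_subset sg] by auto
  moreover have "length (take n h @ drop n g) = P" using assms L_len by simp
  ultimately show ?thesis unfolding Lst_def by simp
qed

lemma comp:
  assumes g: "g \<in> L" and h: "h \<in> L" and n: "n < P"
  shows "(\<Sum>x\<in>L. Kn n g x * Tn n x h) = Kn (Suc n) g h"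
proof -
  define x0 where "x0 = take n h @ drop n g"
  have x0L: "x0 \<in> L" unfolding x0_def using take_drop_L g h n by simp
  have lg: "length g = P" and lh: "length h = P" using g h L_len by auto
  have x0n: "\<And>i. i < P \<Longrightarrow> x0!i = (if i < n then h!i else g!i)"
    unfolding x0_def using lg lh n by (auto simp: nth_append)
  have zero: "Kn n g x * Tn n x h = 0" if x: "x \<in> L" "x \<noteq> x0" for x
  proof (rule ccontr)
    assume "Kn n g x * Tn n x h \<noteq> 0"
    hence nz: "Kn n g x \<noteq> 0" "Tn n x h \<noteq> 0" by auto
    have d: "drop n x = drop n g" using nz(1) unfolding Kn_def by metis
    have e: "h = x[n:=h!n]" using nz(2) unfolding Tn_def by metis
    have lx: "length x = P" using x L_len by auto
    have "x = x0"
    proof (rule nth_equalityI)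
      show "length x = length x0" using lx x0L L_len by auto
      fix i assume "i < length x"
      hence i: "i < P" using lx by simp
      show "x!i = x0!i"
      proof (cases "i < n")
        case True
        have "h!i = x[n:=h!n]!i" by (metis e)
        also have "\<dots> = x!i" using True by simp
        finally show ?thesis using True x0n i by simp
      next
        case False
        have "x!i = drop n x ! (i-n)" using False lx i by simp
        also have "\<dots> = g!i" unfolding d using False lg i by simp
        finally show ?thesis using False x0n i by simp
      qed
    qed
    thus False using x by simp
  qed
  have "(\<Sum>x\<in>L. Kn n g x * Tn n x h) = Kn n g x0 * Tn n x0 h"
    by (rule sum_single[OF finite_Lst x0L]) (use zero in auto)
  also have "Kn n g x0 = (\<Prod>m<n. cp m (take m h @ drop m g) (h!m))"
  proof -
    have "drop n x0 = drop n g" unfolding x0_def using lh n by simp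
    moreover have "(\<Prod>m<n. cp m (take m x0 @ drop m g) (x0!m)) = (\<Prod>m<n. cp m (take m h @ drop m g) (h!m))"
    proof (rule prod.cong)
      fix m assume "m \<in> {..<n}"
      hence m: "m < n" by simp
      have "take m x0 = take m h" unfolding x0_def using m lh n by simp
      moreover have "x0!m = h!m" using x0n m n by simp
      ultimately show "cp m (take m x0 @ drop m g) (x0!m) = cp m (take m h @ drop m g) (h!m)" by simp
    qed simp
    ultimately show ?thesis unfolding Kn_def by simp
  qed
  also have "Tn n x0 h = (if drop (Suc n) h = drop (Suc n) g then cp n x0 (h!n) else 0)"
  proof -
    have "(h = x0[n:=h!n]) \<longleftrightarrow> drop (Suc n) h = drop (Suc n) g"
    proof
      assume e: "h = x0[n:=h!n]"
      show "drop (Suc n) h = drop (Suc n) g"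
      proof (rule nth_equalityI)
        show "length (drop (Suc n) h) = length (drop (Suc n) g)" using lg lh by simp
        fix i assume "i < length (drop (Suc n) h)"
        hence i: "Suc n + i < P" using lh by simp
        have "h ! (Suc n + i) = x0[n:=h!n] ! (Suc n + i)" by (metis e)
        also have "\<dots> = g ! (Suc n + i)" using x0n i by simp
        finally show "drop (Suc n) h ! i = drop (Suc n) g ! i" using lg lh i by simp
      qed
    next
      assume d: "drop (Suc n) h = drop (Suc n) g"
      show "h = x0[n:=h!n]"
      proof (rule nth_equalityI)
        show "length h = length (x0[n:=h!n])" using lh x0L L_len by simp
        fix i assume "i < length h"
        hence i: "i < P" using lh by simp
        show "h!i = x0[n:=h!n]!i"
        proof (cases "i \<le> n")
          case True
          have lx0: "length x0 = P" using x0L L_len by simp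
          show ?thesis
          proof (cases "i = n")
            case True thus ?thesis using lx0 n by simp
          next
            case False thus ?thesis using \<open>i \<le> n\<close> x0n i by simp
          qed
        next
          case False
          have "h!i = drop (Suc n) h ! (i - Suc n)" using False lh i by simp
          also have "\<dots> = g!i" unfolding d using False lg i by simp
          finally show ?thesis using False x0n i by simp
        qed
      qed
    qed
    thus ?thesis unfolding Tn_def by simp
  qed
  also have "(\<Prod>m<n. cp m (take m h @ drop m g) (h!m)) * (if drop (Suc n) h = drop (Suc n) g then cp n x0 (h!n) else 0) = Kn (Suc n) g h"
    unfolding Kn_def prod.lessThan_Suc x0_def[symmetric] by simp
  finally show ?thesis .
qed

lemma cp_upd: "cp n (d[n:=a]) = cp n d"
  unfolding cond_prob_def cond_w_upd by simp

lemma upd_sym: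
  assumes "length x = length y"
  shows "(y = x[n:=y!n]) \<longleftrightarrow> (x = y[n:=x!n])"
  by (metis assms list_update_id list_update_overwrite)

lemma Tn_stat:
  assumes y: "y \<in> L" and n: "n < P"
  shows "(\<Sum>x\<in>L. w P eta x * Tn n x y) = w P eta y"
proof -
  have ly: "length y = P" using y L_len by simp
  have "(\<Sum>x\<in>L. w P eta x * Tn n x y) = (\<Sum>x\<in>L. if x = y[n:=x!n] then w P eta x * cp n x (y!n) else 0)"
  proof (rule sum.cong)
    fix x assume "x \<in> L"
    hence "length x = length y" using L_len ly by simp
    thus "w P eta x * Tn n x y = (if x = y[n:=x!n] then w P eta x * cp n x (y!n) else 0)"
      unfolding Tn_def using upd_sym[OF \<open>length x = length y\<close>, of n] by simp
  qed simp
  also have "\<dots> = (\<Sum>c\<in>{-1..int M}. w P eta (y[n:=c]) * cp n (y[n:=c]) (y!n))"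
    by (rule sum_line[OF y n])
  also have "\<dots> = (\<Sum>c\<in>{-1..int M}. cw n y c * (Rn P eta n y * cp n y (y!n)))"
    by (rule sum.cong) (use key ly n cp_upd in auto)
  also have "\<dots> = (\<Sum>c\<in>{-1..int M}. cw n y c) * (Rn P eta n y * cp n y (y!n))"
    by (simp add: sum_distrib_right)
  also have "\<dots> = Rn P eta n y * cw n y (y!n)"
    unfolding cond_prob_def using Z_pos[OF n, of y] by simp
  also have "\<dots> = w P eta (y[n:=y!n])"
    using key[OF ly n L_nth[OF y n]] by simp
  finally show ?thesis by simp
qed

lemma Tn_row:
  assumes x: "x \<in> L" and n: "n < P"
  shows "(\<Sum>h\<in>L. Tn n x h) = 1"
proof -
  have lx: "length x = P" using x L_len by simp
  have "(\<Sum>h\<in>L. Tn n x h) = (\<Sum>c\<in>{-1..int M}. cp n x (x[n:=c]!n))"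
    unfolding Tn_def by (rule sum_line[OF x n])
  also have "\<dots> = (\<Sum>c\<in>{-1..int M}. cp n x c)" using lx n by simp
  finally show ?thesis using cp_sum[OF n] by simp
qed

lemma Tn_nonneg: "x \<in> L \<Longrightarrow> h \<in> L \<Longrightarrow> n < P \<Longrightarrow> Tn n x h \<ge> 0"
  unfolding Tn_def using cp_nonneg L_nth by auto

lemma Kn_nonneg: "g \<in> L \<Longrightarrow> h \<in> L \<Longrightarrow> n \<le> P \<Longrightarrow> Kn n g h \<ge> 0"
  unfolding Kn_def using cp_nonneg L_nth by (auto intro!: prod_nonneg)

lemma Kn0: "Kn 0 g h = (if h = g then 1 else 0)"
  unfolding Kn_def by simp

lemma Kn_stat:
  assumes "h \<in> L" "n \<le> P"
  shows "(\<Sum>g\<in>L. w P eta g * Kn n g h) = w P eta h"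
  using assms
proof (induction n arbitrary: h)
  case 0
  have "(\<Sum>g\<in>L. w P eta g * (if h = g then 1 else 0)) = (\<Sum>g\<in>L. if h = g then w P eta g else 0)"
    by (rule sum.cong) auto
  thus ?case unfolding Kn0 using 0 by (simp add: finite_Lst)
next
  case (Suc n)
  have n: "n < P" using Suc by simp
  have "(\<Sum>g\<in>L. w P eta g * Kn (Suc n) g h) = (\<Sum>g\<in>L. \<Sum>x\<in>L. w P eta g * Kn n g x * Tn n x h)"
    by (rule sum.cong) (simp_all add: comp[symmetric] Suc.prems n sum_distrib_left mult.assoc)
  also have "\<dots> = (\<Sum>x\<in>L. (\<Sum>g\<in>L. w P eta g * Kn n g x) * Tn n x h)"
    by (subst sum.swap) (simp add: sum_distrib_right)
  also have "\<dots> = (\<Sum>x\<in>L. w P eta x * Tn n x h)"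
    by (rule sum.cong) (use Suc in auto)
  also have "\<dots> = w P eta h" using Tn_stat Suc n by simp
  finally show ?case .
qed

lemma Kn_row:
  assumes "g \<in> L" "n \<le> P"
  shows "(\<Sum>h\<in>L. Kn n g h) = 1"
  using assms
proof (induction n)
  case 0
  show ?case unfolding Kn0 using 0 by (simp add: sum.delta finite_Lst)
next
  case (Suc n)
  have n: "n < P" using Suc by simp
  have "(\<Sum>h\<in>L. Kn (Suc n) g h) = (\<Sum>h\<in>L. \<Sum>x\<in>L. Kn n g x * Tn n x h)"
    by (rule sum.cong) (use comp Suc n in auto)
  also have "\<dots> = (\<Sum>x\<in>L. Kn n g x * (\<Sum>h\<in>L. Tn n x h))"
    by (subst sum.swap) (simp add: sum_distrib_left)
  also have "\<dots> = (\<Sum>x\<in>L. Kn n g x)"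
    by (rule sum.cong) (use Tn_row n in auto)
  finally show ?case using Suc by simp
qed

lemma Rn_pos:
  assumes "x \<in> L" "pos11 x" "n < P"
  shows "Rn P eta n x \<noteq> 0"
proof -
  have o: "oth n P x" using assms(2) L_len[OF assms(1)] unfolding oth_def pos11_def by auto
  have p: "(\<Prod>i\<in>{..<P}-{n}. eta i (x!i)) > 0"
    by (rule prod_pos) (use eta_pos L_nth assms in auto)
  have "Rn P eta n x = (\<Prod>i\<in>{..<P}-{n}. eta i (x!i))" unfolding Rn_def using o by simp
  thus ?thesis using p by linarith
qed

lemma Kn_supp:
  assumes "g \<in> L" "pos11 g" "n \<le> P" "h \<in> L" "Kn n g h \<noteq> 0"
  shows "pos11 h"
  using assms
proof (induction n arbitrary: h)
  case 0 thus ?case unfolding Kn0 by (auto split: if_splits)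
next
  case (Suc n)
  have n: "n < P" using Suc by simp
  have "(\<Sum>x\<in>L. Kn n g x * Tn n x h) \<noteq> 0" using comp Suc n by simp
  then obtain x where x: "x \<in> L" "Kn n g x * Tn n x h \<noteq> 0"
    by (meson sum.neutral)
  hence px: "pos11 x" using Suc by simp
  have nz: "Tn n x h \<noteq> 0" using x(2) by auto
  have e: "h = x[n:=h!n]" using nz unfolding Tn_def by metis
  have c: "cp n x (h!n) \<noteq> 0" using nz unfolding Tn_def by metis
  have "cw n x (h!n) \<noteq> 0" using c unfolding cond_prob_def by auto
  hence "w P eta (x[n:=h!n]) \<noteq> 0"
    using key[OF L_len[OF x(1)] n L_nth[OF Suc.prems(4) n]] Rn_pos[OF x(1) px n] by simp
  hence "w P eta h \<noteq> 0" by (metis e)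
  thus ?case unfolding w_def by (auto split: if_splits)
qed

abbreviation "G \<equiv> Gam M P"
abbreviation "K \<equiv> gibbs_kernel M P eta"

lemma G_L: "G \<subseteq> L" using Gam_Lst by auto

lemma K_eq: "g \<in> L \<Longrightarrow> K g h = (if h \<in> G then Kn P g h else 0)"
  unfolding gibbs_kernel_def Kn_def using G_L L_len by auto

lemma K_nn: "g \<in> G \<Longrightarrow> h \<in> G \<Longrightarrow> K g h \<ge> 0"
proof -
  assume g: "g \<in> G" and h: "h \<in> G"
  hence "g \<in> L" "h \<in> L" using G_L by auto
  thus ?thesis using K_eq[of g h] Kn_nonneg[of g h P] h by simp
qed

lemma Kn_off: "g \<in> G \<Longrightarrow> h \<in> L - G \<Longrightarrow> Kn P g h = 0"
  using Kn_supp[of g P h] G_L by (auto simp: Gam_Lst)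

lemma K_row: "g \<in> G \<Longrightarrow> (\<Sum>h\<in>G. K g h) = 1"
proof -
  assume g: "g \<in> G"
  have "(\<Sum>h\<in>G. K g h) = (\<Sum>h\<in>G. Kn P g h)"
    by (rule sum.cong) (use K_eq g G_L in auto)
  also have "\<dots> = (\<Sum>h\<in>L. Kn P g h)"
    by (rule sum.mono_neutral_left[OF finite_Lst G_L]) (use Kn_off g in auto)
  also have "\<dots> = 1" using Kn_row g G_L by auto
  finally show ?thesis .
qed

lemma weight_pos: "g \<in> L \<Longrightarrow> weight P eta g > 0"
  unfolding weight_def by (rule prod_pos) (use eta_pos L_nth in auto)

definition "Z = (\<Sum>h\<in>G. weight P eta h)"

lemma a_G: "replicate P (-1) \<in> G" and b_G: "replicate P 0 \<in> G"
  by (auto simp: Gam_def pos11_def)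

lemma ab_ne: "replicate P (-1::int) \<noteq> replicate P 0"
  using P1 by (cases P) auto

lemma ZZ_pos: "Z > 0"
proof -
  have "weight P eta (replicate P 0) \<le> Z"
    unfolding Z_def by (rule member_le_sum) (use b_G finite_Gam weight_pos G_L in \<open>auto intro: less_imp_le simp: subset_iff\<close>)
  thus ?thesis using weight_pos[of "replicate P 0"] b_G G_L by auto
qed

lemma target_eq: "g \<in> G \<Longrightarrow> target M P eta g = w P eta g / Z"
  unfolding target_def w_def Z_def by (simp add: Gam_Lst)

lemma pi_nn: "g \<in> G \<Longrightarrow> target M P eta g \<ge> 0"
proof -
  assume g: "g \<in> G"
  hence "w P eta g > 0" using weight_pos G_L by (auto simp: w_def Gam_Lst)
  thus ?thesis using target_eq[OF g] ZZ_pos by simp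
qed

lemma pi_sum: "(\<Sum>g\<in>G. target M P eta g) = 1"
proof -
  have "(\<Sum>g\<in>G. target M P eta g) = (\<Sum>g\<in>G. weight P eta g / Z)"
    by (rule sum.cong) (auto simp: target_eq w_def Gam_Lst)
  also have "\<dots> = 1" using ZZ_pos unfolding Z_def by (simp add: sum_divide_distrib[symmetric])
  finally show ?thesis .
qed

lemma stat: "h \<in> G \<Longrightarrow> (\<Sum>g\<in>G. target M P eta g * K g h) = target M P eta h"
proof -
  assume h: "h \<in> G"
  have "(\<Sum>g\<in>G. target M P eta g * K g h) = (\<Sum>g\<in>G. w P eta g * Kn P g h) / Z"
    unfolding sum_divide_distrib
    by (rule sum.cong) (use h G_L K_eq target_eq in auto)
  also have "(\<Sum>g\<in>G. w P eta g * Kn P g h) = (\<Sum>g\<in>L. w P eta g * Kn P g h)"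
    by (rule sum.mono_neutral_left[OF finite_Lst G_L]) (auto simp: w_def Gam_Lst)
  also have "\<dots> = w P eta h" using Kn_stat h G_L by auto
  finally show ?thesis using target_eq h by simp
qed

lemma K_to_zero: "g \<in> G \<Longrightarrow> K g (replicate P 0) > 0"
proof -
  assume g: "g \<in> G"
  have gL: "g \<in> L" using g G_L by auto
  hence lg: "length g = P" by (rule L_len)
  have "K g (replicate P 0) = Kn P g (replicate P 0)" using K_eq[OF gL] b_G by simp
  also have "\<dots> = (\<Prod>m<P. cp m (take m (replicate P 0) @ drop m g) (replicate P 0 ! m))"
    unfolding Kn_def using lg by simp
  also have "\<dots> > 0"
  proof (rule prod_pos)
    fix m assume "m \<in> {..<P}"
    hence m: "m < P" by simp
    have "cw m (take m (replicate P 0) @ drop m g) 0 > 0"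
      using eta_pos[OF m, of 0] by (simp add: cond_w_eq)
    thus "cp m (take m (replicate P 0) @ drop m g) (replicate P 0 ! m) > 0"
      using cp_pos m by simp
  qed
  finally show ?thesis .
qed

lemma K_from_zero: "h \<in> G \<Longrightarrow> K (replicate P 0) h > 0"
proof -
  assume h: "h \<in> G"
  have lh: "length h = P" using h G_L L_len by auto
  have zL: "replicate P 0 \<in> L" using b_G G_L by auto
  have "K (replicate P 0) h = Kn P (replicate P 0) h" using K_eq[OF zL] h by simp
  also have "\<dots> = (\<Prod>m<P. cp m (take m h @ drop m (replicate P 0)) (h ! m))"
    unfolding Kn_def using lh by simp
  also have "\<dots> > 0"
  proof (rule prod_pos)
    fix m assume "m \<in> {..<P}"
    hence m: "m < P" by simp
    define d where "d = take m h @ drop m (replicate P (0::int))"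
    have dn: "d!i = (if i < m then h!i else 0)" if "i < P" for i
      unfolding d_def using lh m that by (auto simp: nth_append)
    have nc: "\<not> (h!m \<in> {1..int M} \<and> (\<exists>i\<in>{..<P}-{m}. h!m = d!i))"
    proof
      assume "h!m \<in> {1..int M} \<and> (\<exists>i\<in>{..<P}-{m}. h!m = d!i)"
      then obtain i where i: "i < P" "i \<noteq> m" "h!m = d!i" "h!m > 0" by auto
      show False
      proof (cases "i < m")
        case True
        hence "h!i = h!m" using i dn by simp
        have p: "pos11 h" using h by (simp add: Gam_def)
        have "h!i \<le> 0" using p i(1,2) lh m \<open>h!i = h!m\<close> unfolding pos11_def by auto
        thus False using i(4) \<open>h!i = h!m\<close> by simp
      next
        case False thus False using i dn by simp
      qed
    qed
    have hL: "h \<in> L" using h G_L by auto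
    have "cw m d (h!m) = eta m (h!m)" using nc unfolding cond_w_eq by (simp only: if_False mult_1_right)
    hence "cw m d (h!m) > 0" using eta_pos[OF m L_nth[OF hL m]] by simp
    thus "cp m (take m h @ drop m (replicate P 0)) (h ! m) > 0"
      using cp_pos m d_def by simp
  qed
  finally show ?thesis .
qed

lemma pow2_pos: "g \<in> G \<Longrightarrow> h \<in> G \<Longrightarrow> gibbs_pow M P eta 2 g h > 0"
proof -
  assume g: "g \<in> G" and h: "h \<in> G"
  have p1: "gibbs_pow M P eta 1 g d = K g d" for d
  proof -
    have "gibbs_pow M P eta 1 g d = (\<Sum>e\<in>G. (if g = e then 1 else 0) * K e d)" by simp
    also have "\<dots> = (\<Sum>e\<in>G. if g = e then K e d else 0)" by (rule sum.cong) auto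
    also have "\<dots> = K g d" using g finite_Gam by simp
    finally show ?thesis .
  qed
  have "gibbs_pow M P eta 2 g h = (\<Sum>d\<in>G. K g d * K d h)"
    by (simp add: numeral_2_eq_2 p1[simplified])
  also have "\<dots> \<ge> K g (replicate P 0) * K (replicate P 0) h"
    by (rule member_le_sum) (use b_G finite_Gam K_nn g h in \<open>auto intro: mult_nonneg_nonneg\<close>)
  finally show ?thesis using K_to_zero[OF g] K_from_zero[OF h]
    by (smt (verit) mult_pos_pos)
qed

end

theorem proposition3:
  fixes M P R :: nat
    and eta :: "nat \<Rightarrow> int \<Rightarrow> real"
    and PS rB :: "nat \<Rightarrow> real"
    and psi :: "nat \<Rightarrow> int \<Rightarrow> real"
  assumes "M \<ge> 1" and "P \<ge> 1" and "R \<le> P"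
    and "\<And>i. i < R \<Longrightarrow> 0 < PS i \<and> PS i < 1"
    and "\<And>i j. i < P \<Longrightarrow> j \<in> {0..int M} \<Longrightarrow> psi i j > 0"
    and "\<And>i j. i < R \<Longrightarrow> j < 0 \<Longrightarrow> eta i j = 1 - PS i"
    and "\<And>i j. i < R \<Longrightarrow> j \<ge> 0 \<Longrightarrow> eta i j = PS i * psi i j"
    and "\<And>i j. R \<le> i \<Longrightarrow> i < P \<Longrightarrow> j < 0 \<Longrightarrow> eta i j = 1 - rB i"
    and "\<And>i j. R \<le> i \<Longrightarrow> i < P \<Longrightarrow> j \<ge> 0 \<Longrightarrow> eta i j = rB i * psi i j"
    and "\<And>i j. i < P \<Longrightarrow> j \<in> {-1..int M} \<Longrightarrow> eta i j > 0"
  defines "\<beta> \<equiv> Min {gibbs_pow M P eta 2 g g' | g g'. g \<in> Gam M P \<and> g' \<in> Gam M P}"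
  shows "\<beta> > 0 \<and>
    (\<forall>j\<ge>1. \<forall>g\<in>Gam M P. \<forall>g'\<in>Gam M P.
        \<bar>gibbs_pow M P eta j g g' - target M P eta g'\<bar> \<le> (1 - 2 * \<beta>) ^ (j div 2))"
  proof -
  interpret gibbs M P eta using assms(2,10) by unfold_locales auto
  show ?thesis unfolding \<beta>_def
    apply (rule markov[of "Gam M P" "replicate P (-1)" "replicate P 0" "gibbs_kernel M P eta" "target M P eta" "gibbs_pow M P eta"])
    using finite_Gam a_G b_G ab_ne K_nn K_row pi_nn pi_sum stat pow2_pos by simp_all
qed

end
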